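(* In the coding module below, if the field size satisfies $q\ge n$, then for each $j$ a value $\alpha_j\in\mathbb{F}_q$ satisfying the module's requirement exists, and the resulting linear combination $\mathbf{g}$ has the property that every receiver whose next unseen packet has arrived at the sender and that successfully receives $\mathbf{g}$ sees its next unseen packet.
   Context: A sender holds packets $\mathbf{p}_1,\mathbf{p}_2,\dots$ (vectors over $\mathbb{F}_q$, indexed by arrival order) and broadcasts linear combinations to $n$ receivers; via feedback it knows each receiver's knowledge space (the set of linear combinations of packets the receiver can compute). A receiver has seen $\mathbf{p}_k$ if it can compute $\mathbf{p}_k+\mathbf{q}$ where $\mathbf{q}$ is a linear combination of packets with index greater than $k$. If receiver $r$ has seen $\mathbf{p}_k$, its witness $\mathbf{W}_r(\mathbf{p}_k)$ is the unique linear combination known to $r$ of the form $\mathbf{p}_k+\mathbf{q}$ where $\mathbf{q}$ involves only packets of index greater than $k$ that $r$ has not seen. A receiver's next unseen packet is its lowest-index unseen packet. Coding module: let $u_1<\dots<u_m$ be the distinct indices of the next unseen packets of the receivers whose next unseen packet has arrived at the sender, and $R(u_i)$ the set of such receivers whose next unseen packet is $\mathbf{p}_{u_i}$. For $j=1$ to $m$: for each $r\in R(u_j)$ (which has seen $\mathbf{p}_{u_i}$ for all $i<j$), let $\mathbf{y}_r=\sum_{i=1}^{j-1}\alpha_i\mathbf{W}_r(\mathbf{p}_{u_i})$, and pick $\alpha_j\in\mathbb{F}_q$ different from the coefficient of $\mathbf{p}_{u_j}$ in $\mathbf{y}_r$ for every $r\in R(u_j)$. Transmit $\mathbf{g}=\sum_{i=1}^m\alpha_i\mathbf{p}_{u_i}$.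 *)

theory Defs
  imports Main
begin

text \<open>Packets are indexed 0,1,2,... by arrival order; packets 0..N-1 have arrived.
A linear combination of packets is represented by its coefficient vector
v :: nat => 'a (coefficient of packet i is v i). A knowledge space is a set
of such coefficient vectors.\<close>

definition subspace_fn :: "(nat \<Rightarrow> 'a::field) set \<Rightarrow> bool" where
  "subspace_fn K \<longleftrightarrow> (\<lambda>_. 0) \<in> K \<and> (\<forall>v\<in>K. \<forall>w\<in>K. (\<lambda>i. v i + w i) \<in> K)
     \<and> (\<forall>c. \<forall>v\<in>K. (\<lambda>i. c * v i) \<in> K)"

definition seen :: "(nat \<Rightarrow> 'a::field) set \<Rightarrow> nat \<Rightarrow> bool" where
  "seen K k \<longleftrightarrow> (\<exists>v\<in>K. v k = 1 \<and> (\<forall>i<k. v i = 0))"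

definition next_unseen :: "(nat \<Rightarrow> 'a::field) set \<Rightarrow> nat" where
  "next_unseen K = (LEAST k. \<not> seen K k)"

definition witness :: "(nat \<Rightarrow> 'a::field) set \<Rightarrow> nat \<Rightarrow> (nat \<Rightarrow> 'a)" where
  "witness K k = (THE v. v \<in> K \<and> v k = 1 \<and> (\<forall>i<k. v i = 0) \<and> (\<forall>i>k. seen K i \<longrightarrow> v i = 0))"

definition extend :: "(nat \<Rightarrow> 'a::field) set \<Rightarrow> (nat \<Rightarrow> 'a) \<Rightarrow> (nat \<Rightarrow> 'a) set" where
  "extend K g = {(\<lambda>i. v i + c * g i) | v c. v \<in> K}"

end

theory Submission
  imports Defs
begin

lemma sub_add: "subspace_fn K \<Longrightarrow> v \<in> K \<Longrightarrow> w \<in> K \<Longrightarrow> (\<lambda>i. v i + w i) \<in> K"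
  unfolding subspace_fn_def by blast
lemma sub_smul: "subspace_fn K \<Longrightarrow> v \<in> K \<Longrightarrow> (\<lambda>i. c * v i) \<in> K"
  unfolding subspace_fn_def by blast

lemma sub_sum:
  assumes K: "subspace_fn K" and fin: "finite S" and f: "\<forall>x\<in>S. f x \<in> K"
  shows "(\<lambda>i. \<Sum>x\<in>S. c x * f x i) \<in> K"
  using fin f
proof (induction S rule: finite_induct)
  case empty
  then show ?case using K by (simp add: subspace_fn_def)
next
  case (insert x F)
  have a: "(\<lambda>i. c x * f x i) \<in> K" using K insert by (simp add: sub_smul)
  have b: "(\<lambda>i. \<Sum>x\<in>F. c x * f x i) \<in> K" using insert by simp
  have "(\<lambda>i. (c x * f x i) + (\<Sum>x\<in>F. c x * f x i)) \<in> K"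
    using sub_add[OF K a b] .
  then show ?case using insert by simp
qed

lemma wit_ex_aux:
  assumes K: "subspace_fn K" and sk: "seen K k"
  shows "\<exists>v\<in>K. v k = 1 \<and> (\<forall>i<k. v i = 0) \<and> (\<forall>i. k < i \<and> i < k+1+m \<longrightarrow> seen K i \<longrightarrow> v i = 0)"
proof (induction m)
  case 0
  then show ?case using sk unfolding seen_def by auto
next
  case (Suc m)
  then obtain v where v: "v \<in> K" "v k = 1" "\<forall>i<k. v i = 0"
     "\<forall>i. k < i \<and> i < k+1+m \<longrightarrow> seen K i \<longrightarrow> v i = 0" by blast
  define p where "p = k+1+m"
  show ?case
  proof (cases "seen K p \<and> v p \<noteq> 0")
    case False
    then show ?thesis using v by (intro bexI[of _ v]) (auto simp: p_def less_Suc_eq)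
  next
    case True
    then obtain s where s: "s \<in> K" "s p = 1" "\<forall>i<p. s i = 0" unfolding seen_def by auto
    define w where "w = (\<lambda>i. v i + (- v p) * s i)"
    have "(\<lambda>i. (- v p) * s i) \<in> K" using sub_smul[OF K s(1)] .
    hence "w \<in> K" using sub_add[OF K v(1)] unfolding w_def by blast
    moreover have "\<forall>i<p. w i = v i" using s by (simp add: w_def)
    moreover have "w p = 0" using s by (simp add: w_def)
    moreover have "w k = 1" using \<open>\<forall>i<p. w i = v i\<close> v(2) by (simp add: p_def)
    moreover have "\<forall>i<k. w i = 0" using \<open>\<forall>i<p. w i = v i\<close> v(3) by (simp add: p_def)
    moreover have "\<forall>i. k < i \<and> i < k+1+Suc m \<longrightarrow> seen K i \<longrightarrow> w i = 0"
    proof (intro allI impI)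
      fix i assume i: "k < i \<and> i < k+1+Suc m" "seen K i"
      show "w i = 0"
      proof (cases "i = p")
        case True then show ?thesis using \<open>w p = 0\<close> by simp
      next
        case False
        hence "i < p" using i by (simp add: p_def)
        then show ?thesis using \<open>\<forall>i<p. w i = v i\<close> v(4) i by (simp add: p_def)
      qed
    qed
    ultimately show ?thesis by blast
  qed
qed

lemma wit_unique:
  assumes K: "subspace_fn K" and Z: "\<forall>v\<in>K. \<forall>i\<ge>N. v i = 0"
    and v: "v \<in> K" "v k = 1" "\<forall>i<k. v i = 0" "\<forall>i>k. seen K i \<longrightarrow> v i = 0"
    and w: "w \<in> K" "w k = 1" "\<forall>i<k. w i = 0" "\<forall>i>k. seen K i \<longrightarrow> w i = 0"
  shows "v = w"
proof (rule ccontr)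
  assume ne: "v \<noteq> w"
  define d where "d = (\<lambda>i. v i + (-1) * w i)"
  have "(\<lambda>i. (-1) * w i) \<in> K" using sub_smul[OF K w(1)] .
  hence dK: "d \<in> K" using sub_add[OF K v(1)] unfolding d_def by blast
  have "\<exists>j. d j \<noteq> 0" using ne by (auto simp: d_def fun_eq_iff)
  define j where "j = (LEAST j. d j \<noteq> 0)"
  have dj: "d j \<noteq> 0" unfolding j_def by (metis (mono_tags) LeastI \<open>\<exists>j. d j \<noteq> 0\<close>)
  have below: "\<forall>i<j. d i = 0" unfolding j_def using not_less_Least by blast
  have jk: "j > k"
  proof (rule ccontr)
    assume "\<not> k < j"
    hence "j \<le> k" by simp
    then show False using dj v w by (cases "j = k") (auto simp: d_def)
  qed
  define e where "e = (\<lambda>i. inverse (d j) * d i)"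
  have "e \<in> K" using sub_smul[OF K dK] unfolding e_def .
  moreover have "e j = 1" using dj by (simp add: e_def)
  moreover have "\<forall>i<j. e i = 0" using below by (simp add: e_def)
  ultimately have "seen K j" unfolding seen_def by blast
  hence "d j = 0" using v w jk by (simp add: d_def)
  then show False using dj by simp
qed

lemma witness_props:
  assumes K: "subspace_fn K" and Z: "\<forall>v\<in>K. \<forall>i\<ge>N. v i = 0" and sk: "seen K k"
  shows "witness K k \<in> K \<and> witness K k k = 1 \<and> (\<forall>i<k. witness K k i = 0)
         \<and> (\<forall>i>k. seen K i \<longrightarrow> witness K k i = 0)"
proof -
  obtain v where v: "v \<in> K" "v k = 1" "\<forall>i<k. v i = 0"
    "\<forall>i. k < i \<and> i < k+1+N \<longrightarrow> seen K i \<longrightarrow> v i = 0"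
    using wit_ex_aux[OF K sk, of N] by blast
  have v4: "\<forall>i>k. seen K i \<longrightarrow> v i = 0"
  proof (intro allI impI)
    fix i assume "k < i" "seen K i"
    show "v i = 0"
    proof (cases "i < k+1+N")
      case True then show ?thesis using v \<open>k<i\<close> \<open>seen K i\<close> by blast
    next
      case False then show ?thesis using Z v(1) by simp
    qed
  qed
  have "\<exists>!v. v \<in> K \<and> v k = 1 \<and> (\<forall>i<k. v i = 0) \<and> (\<forall>i>k. seen K i \<longrightarrow> v i = 0)"
  proof (rule ex1I[of _ v])
    show "v \<in> K \<and> v k = 1 \<and> (\<forall>i<k. v i = 0) \<and> (\<forall>i>k. seen K i \<longrightarrow> v i = 0)"
      using v v4 by blast
  next
    fix w assume "w \<in> K \<and> w k = 1 \<and> (\<forall>i<k. w i = 0) \<and> (\<forall>i>k. seen K i \<longrightarrow> w i = 0)"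
    then show "w = v" using wit_unique[OF K Z, of w k v] v(1-3) v4 by blast
  qed
  from theI'[OF this] show ?thesis unfolding witness_def .
qed

lemma seen_below_next:
  assumes "i < next_unseen K" shows "seen K i"
  using assms not_less_Least unfolding next_unseen_def by blast

theorem theorem8:
  fixes K :: "'r \<Rightarrow> (nat \<Rightarrow> 'a::{field,finite}) set"
    and Rs :: "'r set" and n N :: nat
  assumes "finite Rs" and "card Rs = n" and "card (UNIV :: 'a set) \<ge> n"
    and "\<forall>r\<in>Rs. subspace_fn (K r)"
    and "\<forall>r\<in>Rs. \<forall>v\<in>K r. \<forall>i\<ge>N. v i = 0"
  defines "A \<equiv> {r\<in>Rs. next_unseen (K r) < N}"
  defines "U \<equiv> (\<lambda>r. next_unseen (K r)) ` A"
  defines "R \<equiv> (\<lambda>u. {r\<in>A. next_unseen (K r) = u})"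
  defines "ycoef \<equiv> (\<lambda>(\<alpha>::nat \<Rightarrow> 'a) r u. \<Sum>u'\<in>{u'\<in>U. u' < u}. \<alpha> u' * witness (K r) u' u)"
  defines "g \<equiv> (\<lambda>(\<alpha>::nat \<Rightarrow> 'a) i. if i \<in> U then \<alpha> i else 0)"
  shows "(\<forall>\<alpha>. \<forall>u\<in>U. \<exists>a. \<forall>r\<in>R u. a \<noteq> ycoef \<alpha> r u)
       \<and> (\<forall>\<alpha>. (\<forall>u\<in>U. \<forall>r\<in>R u. \<alpha> u \<noteq> ycoef \<alpha> r u) \<longrightarrow>
              (\<forall>r\<in>A. seen (extend (K r) (g \<alpha>)) (next_unseen (K r))))"
proof (intro conjI allI ballI impI)
  fix \<alpha> u assume uU: "u \<in> U"
  show "\<exists>a. \<forall>r\<in>R u. a \<noteq> ycoef \<alpha> r u"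
  proof (cases "\<exists>u'\<in>U. u' < u")
    case False
    hence e: "{u'\<in>U. u' < u} = {}" by auto
    have "\<forall>r. ycoef \<alpha> r u = 0" unfolding ycoef_def e by simp
    then show ?thesis by (intro exI[of _ 1]) simp
  next
    case True
    then obtain u' where "u' \<in> U" "u' < u" by blast
    then obtain r0 where r0: "r0 \<in> A" "next_unseen (K r0) = u'" unfolding U_def by blast
    have sub: "R u \<subseteq> Rs - {r0}" using r0 \<open>u'<u\<close> unfolding R_def A_def by auto
    have r0Rs: "r0 \<in> Rs" using r0 unfolding A_def by simp
    have "card (R u) \<le> card (Rs - {r0})" using sub assms(1) by (intro card_mono) auto
    also have "\<dots> = n - 1" using r0Rs assms(1,2) by simp
    also have "\<dots> < n" using r0Rs assms(1,2) card_gt_0_iff[of Rs] by auto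
    finally have c1: "card (R u) < n" .
    have "card ((\<lambda>r. ycoef \<alpha> r u) ` R u) \<le> card (R u)" by (rule card_image_le) (use sub assms(1) finite_subset in blast)
    hence "card ((\<lambda>r. ycoef \<alpha> r u) ` R u) < card (UNIV :: 'a set)"
      using c1 assms(3) by linarith
    hence "(\<lambda>r. ycoef \<alpha> r u) ` R u \<noteq> UNIV" by auto
    then obtain a where "a \<notin> (\<lambda>r. ycoef \<alpha> r u) ` R u" by blast
    then show ?thesis by blast
  qed
next
  fix \<alpha> r
  assume hyp: "\<forall>u\<in>U. \<forall>r\<in>R u. \<alpha> u \<noteq> ycoef \<alpha> r u" and rA: "r \<in> A"
  define u where "u = next_unseen (K r)"
  have rRs: "r \<in> Rs" using rA unfolding A_def by simp
  have Kr: "subspace_fn (K r)" and Zr: "\<forall>v\<in>K r. \<forall>i\<ge>N. v i = 0" using assms(4,5) rRs by auto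
  have uU: "u \<in> U" unfolding U_def u_def using rA by blast
  have rR: "r \<in> R u" unfolding R_def u_def using rA by simp
  define d where "d = \<alpha> u - ycoef \<alpha> r u"
  have d0: "d \<noteq> 0" using hyp uU rR by (simp add: d_def)
  define S where "S = {u'\<in>U. u' < u}"
  have finU: "finite U" unfolding U_def A_def using assms(1) by simp
  hence finS: "finite S" unfolding S_def by simp
  have W: "\<And>u'. u' \<in> S \<Longrightarrow> witness (K r) u' \<in> K r \<and> witness (K r) u' u' = 1
       \<and> (\<forall>i<u'. witness (K r) u' i = 0) \<and> (\<forall>i>u'. seen (K r) i \<longrightarrow> witness (K r) u' i = 0)"
    using witness_props[OF Kr Zr] seen_below_next unfolding S_def u_def by blast
  define y where "y = (\<lambda>i. \<Sum>u'\<in>S. \<alpha> u' * witness (K r) u' i)"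
  have yK: "y \<in> K r" unfolding y_def using sub_sum[OF Kr finS] W by blast
  have yu: "y u = ycoef \<alpha> r u" unfolding y_def ycoef_def S_def by simp
  have wi: "\<And>u' i. u' \<in> S \<Longrightarrow> i < u \<Longrightarrow> witness (K r) u' i = (if u' = i then 1 else 0)"
  proof -
    fix u' i assume a: "u' \<in> S" "i < u"
    have "seen (K r) i" using a(2) seen_below_next unfolding u_def by blast
    then show "witness (K r) u' i = (if u' = i then 1 else 0)"
      using W[OF a(1)] by (cases "i < u'"; cases "i = u'") auto
  qed
  have yi: "\<And>i. i < u \<Longrightarrow> y i = g \<alpha> i"
  proof -
    fix i assume iu: "i < u"
    have "y i = (\<Sum>u'\<in>S. (if u' = i then \<alpha> u' else 0))"
      unfolding y_def by (rule sum.cong) (auto simp: wi iu)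
    also have "\<dots> = (if i \<in> S then \<alpha> i else 0)" using finS by (simp add: sum.delta')
    also have "\<dots> = g \<alpha> i" unfolding g_def S_def using iu by auto
    finally show "y i = g \<alpha> i" .
  qed
  define v where "v = (\<lambda>i. (- inverse d) * y i + inverse d * g \<alpha> i)"
  have "(\<lambda>i. (- inverse d) * y i) \<in> K r" using sub_smul[OF Kr yK] .
  hence vE: "v \<in> extend (K r) (g \<alpha>)" unfolding extend_def v_def
    by (intro CollectI exI[of _ "\<lambda>i. - inverse d * y i"] exI[of _ "inverse d"]) simp
  have "v u = inverse d * (g \<alpha> u - y u)" unfolding v_def by (simp add: algebra_simps)
  also have "\<dots> = 1" using d0 uU yu by (simp add: g_def d_def)
  finally have vu: "v u = 1" .
  have "\<forall>i<u. v i = 0" using yi by (simp add: v_def)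
  then show "seen (extend (K r) (g \<alpha>)) (next_unseen (K r))"
    unfolding seen_def u_def[symmetric] using vE vu by blast
qed

end
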